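(* Let $D$ be a dendrite of finite length with respect to its metric $d$, let $f\colon D\to D$ be continuous, and let $E\subseteq D$ be a connected set with $\limsup_{n\to\infty}\operatorname{diam} f^n(E)>0$. Then: (1) There exists a least nonnegative integer $n_0$ such that $f^{n_0}(E)\cap f^{n_0+k}(E)\ne\emptyset$ for some positive integer $k$. (2) Let $k$ be any positive integer with $f^{n_0}(E)\cap f^{n_0+k}(E)\ne\emptyset$. Then the sets $K_i=\bigcup_{j=0}^\infty f^{n_0+i+jk}(E)$, $i\in\{0,1,\dots,k-1\}$, are connected, $f(K_i)=K_{i+1}$ for $i\in\{0,\dots,k-2\}$, and $f(K_{k-1})\subseteq K_0$. (3) The set $\operatorname{Orb}_f(f^{n_0}(E))$ has finitely many components $L_0,L_1,\dots,L_{r-1}$, where $r$ divides $k$, which can be numbered so that $L_0\supseteq K_0\supseteq f^{n_0}(E)$, $f(L_j)=L_{j+1}$ for $j\in\{0,\dots,r-2\}$ and $f(L_{r-1})\subseteq L_0$; moreover $L_j=\bigcup_{\ell=0}^{k/r-1}K_{j+\ell r}$ for every $j\in\{0,\dots,r-1\}$. (4) $\operatorname{Orb}_f(E)$ is the disjoint union $E\sqcup f(E)\sqcup\dots\sqcup f^{n_0-1}(E)\sqcup L_0\sqcup L_1\sqcup\dots\sqcup L_{r-1}$.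
   Context: A dendrite is a locally connected continuum containing no simple closed curve. Standing convention: the metric $d$ on $D$ is convex (for any $x,y$ there is $z$ with $d(x,z)=d(z,y)=d(x,y)/2$) and compatible with the topology; $D$ has finite length means its one-dimensional Hausdorff measure $\mathcal H^1_d(D)$ is finite. $\operatorname{Orb}_f(A)=\bigcup_{n\ge0}f^n(A)$. *)

theory Defs
  imports "HOL-Analysis.Analysis" "HOL-Library.Liminf_Limsup"
begin

definition dendrite :: "'a::metric_space set \<Rightarrow> bool" where
  "dendrite D \<longleftrightarrow> D \<noteq> {} \<and> compact D \<and> connected D \<and> locally connected D \<and>
     \<not> (\<exists>C. C \<subseteq> D \<and> C homeomorphic (sphere (0::complex) 1))"

text \<open>Convex metric (standing convention).\<close>
definition convex_metric :: "'a::metric_space set \<Rightarrow> bool" where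
  "convex_metric D \<longleftrightarrow> (\<forall>x\<in>D. \<forall>y\<in>D. \<exists>z\<in>D. dist x z = dist x y / 2 \<and> dist z y = dist x y / 2)"

text \<open>delta-approximation of the one-dimensional Hausdorff measure (countable covers by
  bounded sets of diameter at most delta; unbounded sets have infinite diameter and
  never contribute to the infimum).\<close>
definition H1_content :: "real \<Rightarrow> 'a::metric_space set \<Rightarrow> ennreal" where
  "H1_content \<delta> A = (INF U \<in> {U :: nat \<Rightarrow> 'a set. A \<subseteq> (\<Union>i. U i) \<and>
        (\<forall>i. bounded (U i) \<and> diameter (U i) \<le> \<delta>)}. (\<Sum>i. ennreal (diameter (U i))))"

definition hausdorff1 :: "'a::metric_space set \<Rightarrow> ennreal" where
  "hausdorff1 A = (SUP \<delta> \<in> {0<..}. H1_content \<delta> A)"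

definition finite_length :: "'a::metric_space set \<Rightarrow> bool" where
  "finite_length D \<longleftrightarrow> hausdorff1 D < \<infinity>"

definition Orb :: "('a \<Rightarrow> 'a) \<Rightarrow> 'a set \<Rightarrow> 'a set" where
  "Orb f A = (\<Union>n. (f ^^ n) ` A)"

definition Kset :: "('a \<Rightarrow> 'a) \<Rightarrow> 'a set \<Rightarrow> nat \<Rightarrow> nat \<Rightarrow> nat \<Rightarrow> 'a set" where
  "Kset f E n0 k i = (\<Union>j. (f ^^ (n0 + i + j * k)) ` E)"

end

theory Submission
  imports Defs
begin

fun dy :: "('a \<Rightarrow> 'a \<Rightarrow> 'a) \<Rightarrow> 'a \<Rightarrow> 'a \<Rightarrow> nat \<Rightarrow> nat \<Rightarrow> 'a" where
  "dy mid x y 0 k = (if k = 0 then x else y)"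
| "dy mid x y (Suc n) k = (if even k then dy mid x y n (k div 2)
      else mid (dy mid x y n (k div 2)) (dy mid x y n (Suc (k div 2))))"

lemma dy_basic:
  fixes D :: "'a::metric_space set"
  assumes mid: "\<And>a b. a \<in> D \<Longrightarrow> b \<in> D \<Longrightarrow> mid a b \<in> D \<and> dist a (mid a b) = dist a b / 2 \<and> dist (mid a b) b = dist a b / 2"
    and xy: "x \<in> D" "y \<in> D"
  shows "(\<forall>k \<le> 2^n. dy mid x y n k \<in> D) \<and> (\<forall>k < 2^n. dist (dy mid x y n k) (dy mid x y n (Suc k)) \<le> dist x y / 2^n)
     \<and> dy mid x y n 0 = x \<and> dy mid x y n (2^n) = y"
proof (induction n)
  case 0
  then show ?case using xy by auto
next
  case (Suc n)
  note IH = Suc.IH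
  let ?g = "dy mid x y n"
  let ?h = "dy mid x y (Suc n)"
  have A: "\<forall>k \<le> 2^Suc n. ?h k \<in> D"
  proof (intro allI impI)
    fix k :: nat assume k: "k \<le> 2^Suc n"
    show "?h k \<in> D"
    proof (cases "even k")
      case True then show ?thesis using IH k by auto
    next
      case False
      then have "k div 2 < 2^n" using k by (auto elim!: oddE)
      then show ?thesis using IH False mid by auto
    qed
  qed
  have B: "\<forall>k < 2^Suc n. dist (?h k) (?h (Suc k)) \<le> dist x y / 2^Suc n"
  proof (intro allI impI)
    fix k :: nat assume k: "k < 2^Suc n"
    show "dist (?h k) (?h (Suc k)) \<le> dist x y / 2^Suc n"
    proof (cases "even k")
      case True
      then obtain j where j: "k = 2*j" by auto
      then have jl: "j < 2^n" using k by auto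
      have "?h k = ?g j" using j by simp
      moreover have "?h (Suc k) = mid (?g j) (?g (Suc j))" using j by simp
      moreover have "?g j \<in> D" "?g (Suc j) \<in> D" using IH jl by auto
      ultimately have "dist (?h k) (?h (Suc k)) = dist (?g j) (?g (Suc j)) / 2" using mid by simp
      also have "\<dots> \<le> (dist x y / 2^n) / 2" using IH jl by (intro divide_right_mono) auto
      finally show ?thesis by simp
    next
      case False
      then obtain j where j: "k = 2*j + 1" by (auto elim!: oddE)
      then have jl: "j < 2^n" using k by auto
      have "?h k = mid (?g j) (?g (Suc j))" using j by simp
      moreover have "?h (Suc k) = ?g (Suc j)" using j by simp
      moreover have "?g j \<in> D" "?g (Suc j) \<in> D" using IH jl by auto
      ultimately have "dist (?h k) (?h (Suc k)) = dist (?g j) (?g (Suc j)) / 2" using mid by simp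
      also have "\<dots> \<le> (dist x y / 2^n) / 2" using IH jl by (intro divide_right_mono) auto
      finally show ?thesis by simp
    qed
  qed
  show ?case using A B IH by simp
qed

lemma dy_lip:
  fixes D :: "'a::metric_space set"
  assumes mid: "\<And>a b. a \<in> D \<Longrightarrow> b \<in> D \<Longrightarrow> mid a b \<in> D \<and> dist a (mid a b) = dist a b / 2 \<and> dist (mid a b) b = dist a b / 2"
    and xy: "x \<in> D" "y \<in> D"
  shows "i \<le> j \<Longrightarrow> j \<le> 2^n \<Longrightarrow> dist (dy mid x y n i) (dy mid x y n j) \<le> real (j - i) * (dist x y / 2^n)"
proof (induction j)
  case 0
  then show ?case by simp
next
  case (Suc j)
  note B = dy_basic[OF mid xy, of n]
  show ?case
  proof (cases "i = Suc j")
    case True then show ?thesis by simp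
  next
    case False
    then have ij: "i \<le> j" using Suc by auto
    have "dist (dy mid x y n i) (dy mid x y n (Suc j)) \<le> dist (dy mid x y n i) (dy mid x y n j) + dist (dy mid x y n j) (dy mid x y n (Suc j))"
      by (rule dist_triangle)
    also have "\<dots> \<le> real (j - i) * (dist x y / 2^n) + dist x y / 2^n"
      using Suc ij B by (intro add_mono) auto
    also have "\<dots> = real (Suc j - i) * (dist x y / 2^n)" using ij by (simp add: Suc_diff_le field_simps)
    finally show ?thesis .
  qed
qed

lemma dy_lip_abs:
  fixes D :: "'a::metric_space set"
  assumes mid: "\<And>a b. a \<in> D \<Longrightarrow> b \<in> D \<Longrightarrow> mid a b \<in> D \<and> dist a (mid a b) = dist a b / 2 \<and> dist (mid a b) b = dist a b / 2"
    and xy: "x \<in> D" "y \<in> D" and ij: "i \<le> 2^n" "j \<le> 2^n"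
  shows "dist (dy mid x y n i) (dy mid x y n j) \<le> \<bar>real j - real i\<bar> * (dist x y / 2^n)"
proof (cases "i \<le> j")
  case True
  then show ?thesis using dy_lip[OF mid xy True ij(2)] by (simp add: of_nat_diff)
next
  case False
  then show ?thesis using dy_lip[OF mid xy _ ij(1), of j] by (simp add: of_nat_diff dist_commute)
qed


definition idx :: "nat \<Rightarrow> real \<Rightarrow> nat" where "idx n t = nat \<lfloor>t * 2^n\<rfloor>"

lemma idx_le: "0 \<le> t \<Longrightarrow> t \<le> 1 \<Longrightarrow> idx n t \<le> 2^n"
proof -
  assume t: "0 \<le> t" "t \<le> 1"
  have "t * 2^n \<le> 2^n" using t by (simp add: mult_left_le_one_le)
  then have "\<lfloor>t * 2^n\<rfloor> \<le> 2^n" by (metis floor_mono floor_of_nat of_nat_numeral of_nat_power)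
  then show ?thesis unfolding idx_def by (metis nat_le_iff of_nat_numeral of_nat_power)
qed

lemma idx_Suc: "0 \<le> t \<Longrightarrow> idx (Suc n) t = 2 * idx n t \<or> idx (Suc n) t = 2 * idx n t + 1"
proof -
  assume t: "0 \<le> t"
  define u where "u = t * 2^n"
  have u: "0 \<le> u" using t unfolding u_def by simp
  have i1: "idx (Suc n) t = nat \<lfloor>2 * u\<rfloor>" unfolding idx_def u_def power_Suc by (simp add: mult.left_commute)
  have i2: "idx n t = nat \<lfloor>u\<rfloor>" unfolding idx_def u_def by simp
  have "\<lfloor>2 * u\<rfloor> = 2 * \<lfloor>u\<rfloor> \<or> \<lfloor>2 * u\<rfloor> = 2 * \<lfloor>u\<rfloor> + 1"
  proof -
    have a: "real_of_int \<lfloor>u\<rfloor> \<le> u" "u < real_of_int \<lfloor>u\<rfloor> + 1" by linarith+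
    have "2 * \<lfloor>u\<rfloor> \<le> \<lfloor>2 * u\<rfloor>" using a by (simp add: le_floor_iff)
    moreover have "\<lfloor>2 * u\<rfloor> < 2 * \<lfloor>u\<rfloor> + 2"
    proof -
      have "real_of_int \<lfloor>2 * u\<rfloor> \<le> 2 * u" by (rule of_int_floor_le)
      then have "real_of_int \<lfloor>2 * u\<rfloor> < 2 * real_of_int \<lfloor>u\<rfloor> + 2" using a by linarith
      then have "real_of_int \<lfloor>2 * u\<rfloor> < real_of_int (2 * \<lfloor>u\<rfloor> + 2)" by simp
      then show ?thesis by (simp only: of_int_less_iff)
    qed
    ultimately show ?thesis by linarith
  qed
  moreover have "0 \<le> \<lfloor>u\<rfloor>" using u by simp
  ultimately show ?thesis unfolding i1 i2 by (auto simp: nat_add_distrib nat_mult_distrib)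
qed

lemma idx_diff: "0 \<le> s \<Longrightarrow> 0 \<le> t \<Longrightarrow> \<bar>real (idx n s) - real (idx n t)\<bar> \<le> \<bar>s - t\<bar> * 2^n + 1"
proof -
  assume st: "0 \<le> s" "0 \<le> t"
  define u where "u = s * 2^n"
  define v where "v = t * 2^n"
  have e1: "real (idx n s) = real_of_int \<lfloor>u\<rfloor>" "real (idx n t) = real_of_int \<lfloor>v\<rfloor>"
    using st unfolding idx_def u_def v_def by auto
  have e2: "\<bar>u - v\<bar> = \<bar>s - t\<bar> * 2^n" unfolding u_def v_def by (simp add: abs_mult left_diff_distrib[symmetric])
  have f: "real_of_int \<lfloor>u\<rfloor> \<le> u" "u < real_of_int \<lfloor>u\<rfloor> + 1"
     "real_of_int \<lfloor>v\<rfloor> \<le> v" "v < real_of_int \<lfloor>v\<rfloor> + 1" by linarith+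
  have "\<bar>real_of_int \<lfloor>u\<rfloor> - real_of_int \<lfloor>v\<rfloor>\<bar> \<le> \<bar>u - v\<bar> + 1"
    using f by linarith
  then show ?thesis using e1 e2 by simp
qed

lemma le_minus_nonneg: "A \<le> B - C \<Longrightarrow> 0 \<le> C \<Longrightarrow> A \<le> (B::real)"
  by linarith

lemma dist_triangle3: "dist a d \<le> dist a b + dist b c + dist c (d::'a::metric_space)"
  using dist_triangle[of a d b] dist_triangle[of b d c] by linarith

lemma geodesic_exists:
  fixes D :: "'a::metric_space set"
  assumes D: "compact D" "convex_metric D" and xy: "x \<in> D" "y \<in> D"
  obtains g where "\<And>t. t \<in> {0..1} \<Longrightarrow> g t \<in> D" "g 0 = x" "g 1 = y"
    "\<And>s t. s \<in> {0..1} \<Longrightarrow> t \<in> {0..1} \<Longrightarrow> dist (g s) (g t) = \<bar>s - t\<bar> * dist x y"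
proof -
  define mid where "mid a b = (SOME z. z \<in> D \<and> dist a z = dist a b / 2 \<and> dist z b = dist a b / 2)" for a b
  have mid: "mid a b \<in> D \<and> dist a (mid a b) = dist a b / 2 \<and> dist (mid a b) b = dist a b / 2"
    if "a \<in> D" "b \<in> D" for a b
  proof -
    have "\<exists>z\<in>D. dist a z = dist a b / 2 \<and> dist z b = dist a b / 2"
      using D(2) that unfolding convex_metric_def by simp
    then obtain z where "z \<in> D \<and> dist a z = dist a b / 2 \<and> dist z b = dist a b / 2"
      by (elim bexE) (rule that, simp)
    then show ?thesis unfolding mid_def by (rule someI)
  qed
  let ?d = "dist x y"
  define a where "a t n = dy mid x y n (idx n t)" for t n
  note B = dy_basic[OF mid xy]
  have aD: "a t n \<in> D" if "t \<in> {0..1}" for t n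
    using B[of n] idx_le[of t n] that unfolding a_def by auto
  have step: "dist (a t n) (a t (Suc n)) \<le> ?d / 2^Suc n" if t: "t \<in> {0..1}" for t n
  proof -
    have e: "dy mid x y (Suc n) (2 * idx n t) = a t n" unfolding a_def by simp
    have l1: "2 * idx n t \<le> 2^Suc n" using idx_le[of t n] t by auto
    have l2: "idx (Suc n) t \<le> 2^Suc n" using idx_le[of t "Suc n"] t by auto
    have "dist (dy mid x y (Suc n) (2 * idx n t)) (dy mid x y (Suc n) (idx (Suc n) t))
       \<le> \<bar>real (idx (Suc n) t) - real (2 * idx n t)\<bar> * (?d / 2^Suc n)"
      by (rule dy_lip_abs[OF mid xy l1 l2])
    also have "\<dots> \<le> 1 * (?d / 2^Suc n)"
      using idx_Suc[of t n] t by (intro mult_right_mono) auto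
    finally show ?thesis using e unfolding a_def by simp
  qed
  have tele: "dist (a t n) (a t (n + m)) \<le> ?d / 2^n - ?d / 2^(n+m)" if t: "t \<in> {0..1}" for t n m
  proof (induction m)
    case 0 then show ?case by simp
  next
    case (Suc m)
    have "dist (a t n) (a t (n + Suc m)) \<le> dist (a t n) (a t (n + m)) + dist (a t (n+m)) (a t (Suc (n + m)))"
      by (simp add: dist_triangle)
    also have "\<dots> \<le> (?d / 2^n - ?d / 2^(n+m)) + ?d / 2^Suc (n+m)"
      using Suc step[OF t, of "n+m"] by (intro add_mono) auto
    also have "\<dots> = ?d / 2^n - ?d / 2^(n + Suc m)" by (simp add: field_simps)
    finally show ?case .
  qed
  have tele2: "dist (a t n) (a t m) \<le> ?d / 2^n" if t: "t \<in> {0..1}" and "n \<le> m" for t n m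
  proof -
    obtain q where "m = n + q" using \<open>n \<le> m\<close> le_Suc_ex by blast
    moreover have "0 \<le> ?d / 2^(n+q)" by simp
    then show ?thesis using tele[OF t, of n q] \<open>m = n + q\<close> by (auto intro: le_minus_nonneg)
  qed
  have small: "\<exists>N. ?d / 2^N < e" if "e > 0" for e
  proof -
    have "(\<lambda>n. ?d * inverse (2^n)) \<longlonglongrightarrow> ?d * 0"
      by (intro tendsto_mult tendsto_const LIMSEQ_inverse_realpow_zero) auto
    then have "\<forall>\<^sub>F n in sequentially. ?d * inverse (2^n) < e" using that
      by (simp add: order_tendstoD(2))
    then obtain N where "?d * inverse (2^N) < e" by (meson eventually_sequentially order_refl)
    then show ?thesis by (auto simp: field_simps)
  qed
  have cauchy: "Cauchy (a t)" if t: "t \<in> {0..1}" for t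
  proof (rule metric_CauchyI)
    fix e :: real assume "e > 0"
    then obtain N where N: "?d / 2^N < e" using small by blast
    show "\<exists>M. \<forall>m\<ge>M. \<forall>n\<ge>M. dist (a t m) (a t n) < e"
    proof (intro exI allI impI)
      fix m n assume mn: "N \<le> m" "N \<le> n"
      have mono: "?d / 2^k \<le> ?d / 2^N" if "N \<le> k" for k
        using that by (intro divide_left_mono) (auto simp: power_increasing)
      show "dist (a t m) (a t n) < e"
      proof (cases "m \<le> n")
        case True
        then show ?thesis using tele2[OF t True] mono[OF mn(1)] N by linarith
      next
        case False
        then show ?thesis using tele2[OF t, of n m] mono[OF mn(2)] N by (simp add: dist_commute)
      qed
    qed
  qed
  have cD: "complete D" using D(1) by (rule compact_imp_complete)
  have conv: "\<exists>l\<in>D. a t \<longlonglongrightarrow> l" if t: "t \<in> {0..1}" for t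
    using cD cauchy[OF t] aD[OF t] unfolding complete_def by blast
  define g where "g t = lim (a t)" for t
  have gl: "a t \<longlonglongrightarrow> g t" "g t \<in> D" if t: "t \<in> {0..1}" for t
    using conv[OF t] unfolding g_def by (auto simp: limI)
  have gclose: "dist (g t) (a t n) \<le> ?d / 2^n" if t: "t \<in> {0..1}" for t n
  proof -
    have "(\<lambda>m. dist (a t m) (a t n)) \<longlonglongrightarrow> dist (g t) (a t n)"
      by (intro tendsto_dist gl[OF t] tendsto_const)
    moreover have "\<forall>\<^sub>F m in sequentially. dist (a t m) (a t n) \<le> ?d / 2^n"
    proof (rule eventually_sequentiallyI[of n])
      fix m assume "n \<le> m"
      then show "dist (a t m) (a t n) \<le> ?d / 2^n" using tele2[OF t \<open>n \<le> m\<close>] by (simp add: dist_commute)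
    qed
    ultimately show ?thesis by (rule tendsto_upperbound) simp
  qed
  have g0: "g 0 = x"
  proof -
    have "a 0 n = x" for n using B[of n] unfolding a_def idx_def by simp
    then have "a 0 = (\<lambda>n. x)" by auto
    then show ?thesis unfolding g_def by (metis limI tendsto_const)
  qed
  have g1: "g 1 = y"
  proof -
    have "a 1 n = y" for n using B[of n] unfolding a_def idx_def by (simp add: nat_power_eq)
    then have "a 1 = (\<lambda>n. y)" by auto
    then show ?thesis unfolding g_def by (metis limI tendsto_const)
  qed
  have lip: "dist (g s) (g t) \<le> \<bar>s - t\<bar> * ?d" if s: "s \<in> {0..1}" and t: "t \<in> {0..1}" for s t
  proof -
    have bnd: "dist (g s) (g t) \<le> \<bar>s - t\<bar> * ?d + 3 * (?d / 2^n)" for n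
    proof -
      have "dist (a s n) (a t n) \<le> \<bar>real (idx n t) - real (idx n s)\<bar> * (?d / 2^n)"
        unfolding a_def using s t idx_le[of s n] idx_le[of t n] by (intro dy_lip_abs[OF mid xy]) auto
      also have "\<dots> \<le> (\<bar>s - t\<bar> * 2^n + 1) * (?d / 2^n)"
        using idx_diff[of t s n] s t by (intro mult_right_mono) (auto simp: abs_minus_commute)
      also have "\<dots> = \<bar>s - t\<bar> * ?d + ?d / 2^n" by (simp add: field_simps)
      finally have m: "dist (a s n) (a t n) \<le> \<bar>s - t\<bar> * ?d + ?d / 2^n" .
      have "dist (g s) (g t) \<le> dist (g s) (a s n) + dist (a s n) (a t n) + dist (a t n) (g t)"
        by (rule dist_triangle3)
      then show ?thesis using m gclose[OF s, of n] gclose[OF t, of n] by (simp add: dist_commute)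
    qed
    show ?thesis
    proof (rule ccontr)
      assume "\<not> ?thesis"
      then have "dist (g s) (g t) - \<bar>s - t\<bar> * ?d > 0" by simp
      define E where "E = dist (g s) (g t) - \<bar>s - t\<bar> * ?d"
      have "E > 0" using \<open>dist (g s) (g t) - \<bar>s - t\<bar> * ?d > 0\<close> unfolding E_def .
      then obtain N where N: "?d / 2^N < E / 3" using small[of "E / 3"] by auto
      define Q where "Q = ?d / 2^N"
      have b: "dist (g s) (g t) \<le> \<bar>s - t\<bar> * ?d + 3 * Q" unfolding Q_def by (rule bnd)
      have "Q < E / 3" using N unfolding Q_def .
      then show False using b E_def by linarith
    qed
  qed
  have iso: "dist (g s) (g t) = \<bar>s - t\<bar> * ?d" if s: "s \<in> {0..1}" and t: "t \<in> {0..1}" for s t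
  proof -
    have ge: "dist (g u) (g v) \<ge> (v - u) * ?d" if u: "u \<in> {0..1}" and v: "v \<in> {0..1}" and uv: "u \<le> v" for u v
    proof -
      have "?d \<le> dist x (g u) + dist (g u) (g v) + dist (g v) y"
        by (rule dist_triangle3)
      moreover have "dist x (g u) \<le> u * ?d" using lip[of 0 u] u g0 by simp
      moreover have "dist (g v) y \<le> (1 - v) * ?d" using lip[of v 1] v g1 by simp
      ultimately show ?thesis by (simp add: algebra_simps)
    qed
    show ?thesis
    proof (cases "s \<le> t")
      case True then show ?thesis using ge[OF s t True] lip[OF s t] by simp
    next
      case False then show ?thesis using ge[OF t s] lip[OF s t] by (simp add: dist_commute)
    qed
  qed
  show ?thesis using that[of g] gl g0 g1 iso by blast
qed

lemma geodesic_path: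
  fixes D :: "'a::metric_space set"
  assumes D: "compact D" "convex_metric D" and xy: "x \<in> D" "y \<in> D"
  obtains g where "path g" "path_image g \<subseteq> D" "pathstart g = x" "pathfinish g = y"
    "\<And>s t. s \<in> {0..1} \<Longrightarrow> t \<in> {0..1} \<Longrightarrow> dist (g s) (g t) = \<bar>s - t\<bar> * dist x y"
proof -
  obtain g where g: "\<And>t. t \<in> {0..1} \<Longrightarrow> g t \<in> D" "g 0 = x" "g 1 = y"
    "\<And>s t. s \<in> {0..1} \<Longrightarrow> t \<in> {0..1} \<Longrightarrow> dist (g s) (g t) = \<bar>s - t\<bar> * dist x y"
    using geodesic_exists[OF D xy] by blast
  have "(dist x y)-lipschitz_on {0..1} g"
    by (rule lipschitz_onI) (auto simp: g(4) dist_real_def mult.commute)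
  then have "path g" unfolding path_def by (rule lipschitz_on_continuous_on)
  moreover have "path_image g \<subseteq> D" using g(1) unfolding path_image_def by auto
  ultimately show ?thesis using that[of g] g by (auto simp: pathstart_def pathfinish_def)
qed

lemma convex_locally_path_connected:
  fixes D :: "'a::metric_space set"
  assumes D: "compact D" "convex_metric D"
  shows "locally path_connected D"
  unfolding locally_path_connected
proof (intro allI impI, elim conjE)
  fix V x assume V: "openin (top_of_set D) V" and x: "x \<in> V"
  obtain r where r: "r > 0" "\<And>x'. x' \<in> D \<Longrightarrow> dist x' x < r \<Longrightarrow> x' \<in> V"
    using V x unfolding openin_euclidean_subtopology_iff by blast
  have VD: "V \<subseteq> D" using V by (simp add: openin_euclidean_subtopology_iff)
  define U where "U = D \<inter> ball x r"
  have "openin (top_of_set D) U" unfolding U_def by (simp add: openin_open_Int)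
  moreover have pc: "path_component U x z" if z: "z \<in> U" for z
  proof -
    have zD: "z \<in> D" "dist x z < r" using z unfolding U_def by auto
    obtain g where g: "path g" "path_image g \<subseteq> D" "pathstart g = x" "pathfinish g = z"
      "\<And>s t. s \<in> {0..1} \<Longrightarrow> t \<in> {0..1} \<Longrightarrow> dist (g s) (g t) = \<bar>s - t\<bar> * dist x z"
      using geodesic_path[OF D _ zD(1)] x VD by blast
    have "path_image g \<subseteq> ball x r"
    proof
      fix w assume "w \<in> path_image g"
      then obtain t where t: "t \<in> {0..1}" "w = g t" unfolding path_image_def by auto
      have "dist x w = dist (g 0) (g t)" using g(3) t unfolding pathstart_def by simp
      also have "\<dots> = t * dist x z" using g(5)[of 0 t] t by simp
      also have "\<dots> \<le> dist x z" using t by (simp add: mult_left_le_one_le)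
      finally show "w \<in> ball x r" using zD by simp
    qed
    then show ?thesis unfolding path_component_def U_def using g by blast
  qed
  moreover have "path_connected U"
    unfolding path_connected_component
    using pc by (meson path_component_sym path_component_trans)
  moreover have "x \<in> U" unfolding U_def using x VD r by auto
  moreover have "U \<subseteq> V" unfolding U_def using r by (auto simp: dist_commute)
  ultimately show "\<exists>U. openin (top_of_set D) U \<and> path_connected U \<and> x \<in> U \<and> U \<subseteq> V" by blast
qed

lemma cut_point_nv:
  fixes D :: "'b::{complete_space,real_normed_vector} set"
  assumes D: "compact D" "convex_metric D"
    and nocirc: "\<not> (\<exists>C. C \<subseteq> D \<and> C homeomorphic (sphere (0::complex) 1))"
    and xy: "x \<in> D" "y \<in> D" "x \<noteq> y"
  shows "\<exists>m\<in>D. m \<noteq> x \<and> m \<noteq> y \<and> y \<notin> connected_component_set (D - {m}) x"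
proof -
  obtain g where g: "path g" "path_image g \<subseteq> D" "pathstart g = x" "pathfinish g = y"
    and iso: "\<And>s t. s \<in> {0..1} \<Longrightarrow> t \<in> {0..1} \<Longrightarrow> dist (g s) (g t) = \<bar>s - t\<bar> * dist x y"
    using geodesic_path[OF D xy(1,2)] by blast
  have g0: "g 0 = x" and g1: "g 1 = y" using g unfolding pathstart_def pathfinish_def by auto
  have dpos: "dist x y > 0" using xy by simp
  have ginj: "inj_on g {0..1}"
  proof (rule inj_onI)
    fix s t assume "s \<in> {0..1}" "t \<in> {0..1}" "g s = g t"
    then have "\<bar>s - t\<bar> * dist x y = 0" using iso by fastforce
    then show "s = t" using dpos by simp
  qed
  have arcg: "arc g" using g(1) ginj by (simp add: arc_def)
  have gD: "g t \<in> D" if "t \<in> {0..1}" for t using g(2) that unfolding path_image_def by auto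
  define m where "m = g (1/2)"
  have mD: "m \<in> D" unfolding m_def by (rule gD) simp
  have mx: "m \<noteq> x"
  proof
    assume "m = x"
    then have "g (1/2) = g 0" using g0 m_def by simp
    then show False using ginj by (auto dest: inj_onD)
  qed
  have my: "m \<noteq> y"
  proof
    assume "m = y"
    then have "g (1/2) = g 1" using g1 m_def by simp
    then show False using ginj by (auto dest: inj_onD)
  qed
  show ?thesis
  proof (rule bexI[OF _ mD], intro conjI mx my notI)
    assume ycc: "y \<in> connected_component_set (D - {m}) x"
    have lpc: "locally path_connected D" by (rule convex_locally_path_connected[OF D])
    have "openin (top_of_set D) (D - {m})" by (simp add: openin_delete)
    then have lpc2: "locally path_connected (D - {m})" using lpc locally_open_subset by blast
    then have "y \<in> path_component_set (D - {m}) x" using ycc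
      by (simp add: path_component_eq_connected_component_set)
    then obtain p where p: "path p" "path_image p \<subseteq> D - {m}" "pathstart p = x" "pathfinish p = y"
      unfolding path_component_def by auto
    have cp: "closed (path_image p)" using p(1) by (simp add: closed_path_image)
    have mp: "g (1/2) \<notin> path_image p" using p(2) m_def by auto
    have xp: "x \<in> path_image p" "y \<in> path_image p" using p by auto
    have contg: "continuous_on {0..1} g" using g(1) by (simp add: path_def)
    define T1 where "T1 = {0..1/2} \<inter> g -` path_image p"
    define T2 where "T2 = {1/2..1} \<inter> g -` path_image p"
    have cT1: "closed T1" unfolding T1_def
      by (rule continuous_closed_preimage[OF continuous_on_subset[OF contg] _ cp]) auto
    have cT2: "closed T2" unfolding T2_def
      by (rule continuous_closed_preimage[OF continuous_on_subset[OF contg] _ cp]) auto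
    have T10: "0 \<in> T1" unfolding T1_def using g0 xp by auto
    have T21: "1 \<in> T2" unfolding T2_def using g1 xp by auto
    have bT1: "bdd_above T1" unfolding T1_def by (rule bdd_aboveI[of _ "1/2"]) auto
    have bT2: "bdd_below T2" unfolding T2_def by (rule bdd_belowI[of _ "1/2"]) auto
    define s where "s = Sup T1"
    define s' where "s' = Inf T2"
    have sT1: "s \<in> T1" unfolding s_def using closed_contains_Sup[OF _ bT1 cT1] T10 by blast
    have sT2: "s' \<in> T2" unfolding s'_def using closed_contains_Inf[OF _ bT2 cT2] T21 by blast
    have s_lt: "s < 1/2" "0 \<le> s"
    proof -
      have "s \<le> 1/2" "0 \<le> s" using sT1 unfolding T1_def by auto
      moreover have "s \<noteq> 1/2"
      proof
        assume h: "s = 1/2"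
        have "g s \<in> path_image p" using sT1 unfolding T1_def by simp
        then show False using mp unfolding h by blast
      qed
      ultimately show "s < 1/2" "0 \<le> s" by auto
    qed
    have s'_gt: "1/2 < s'" "s' \<le> 1"
    proof -
      have "1/2 \<le> s'" "s' \<le> 1" using sT2 unfolding T2_def by auto
      moreover have "s' \<noteq> 1/2"
      proof
        assume h: "s' = 1/2"
        have "g s' \<in> path_image p" using sT2 unfolding T2_def by simp
        then show False using mp unfolding h by blast
      qed
      ultimately show "1/2 < s'" "s' \<le> 1" by auto
    qed
    have gsp: "g s \<in> path_image p" "g s' \<in> path_image p" using sT1 sT2 unfolding T1_def T2_def by auto
    have between: "g t \<notin> path_image p" if "s < t" "t < s'" for t
    proof
      assume gt: "g t \<in> path_image p"
      show False
      proof (cases "t \<le> 1/2")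
        case True
        then have "t \<in> T1" unfolding T1_def using gt \<open>s < t\<close> s_lt by auto
        then have "t \<le> s" unfolding s_def using bT1 by (rule cSup_upper)
        then show False using \<open>s < t\<close> by simp
      next
        case False
        then have "t \<in> T2" unfolding T2_def using gt \<open>t < s'\<close> s'_gt by auto
        then have "s' \<le> t" unfolding s'_def using bT2 by (rule cInf_lower)
        then show False using \<open>t < s'\<close> by simp
      qed
    qed
    define a1 where "a1 = subpath s s' g"
    have arc1: "arc a1" unfolding a1_def
      using s_lt s'_gt by (intro arc_subpath_arc[OF arcg]) auto
    have im1: "path_image a1 = g ` {s..s'}" unfolding a1_def using s_lt s'_gt
      by (simp add: path_image_subpath)
    obtain u where u: "u \<in> {0..1}" "p u = g s'" using gsp unfolding path_image_def by auto
    obtain v where v: "v \<in> {0..1}" "p v = g s" using gsp unfolding path_image_def by auto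
    have gss: "g s \<noteq> g s'"
    proof
      assume "g s = g s'"
      then have "s = s'" using ginj s_lt s'_gt by (auto dest: inj_onD)
      then show False using s_lt s'_gt by simp
    qed
    have psub: "path (subpath u v p)" using p(1) u v by simp
    obtain q where q: "arc q" "path_image q \<subseteq> path_image (subpath u v p)"
      "pathstart q = g s'" "pathfinish q = g s"
      using path_contains_arc[OF psub] u v gss by (metis pathfinish_subpath pathstart_subpath)
    have qp: "path_image q \<subseteq> path_image p"
      using q(2) path_image_subpath_subset[OF u(1) v(1)] by blast
    have sp: "simple_path (a1 +++ q)"
    proof (rule simple_path_join_loop[OF arc1 q(1)])
      show "pathfinish a1 = pathstart q" unfolding a1_def using q(3) by simp
      show "pathfinish q = pathstart a1" unfolding a1_def using q(4) by simp
      show "path_image a1 \<inter> path_image q \<subseteq> {pathstart a1, pathstart q}"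
      proof
        fix z assume z: "z \<in> path_image a1 \<inter> path_image q"
        then obtain t where t: "t \<in> {s..s'}" "z = g t" using im1 by auto
        have "g t \<in> path_image p" using z t qp by auto
        then have "t = s \<or> t = s'" using between t(1) by force
        then show "z \<in> {pathstart a1, pathstart q}" unfolding a1_def using t q(3) by auto
      qed
    qed
    have loop: "pathfinish (a1 +++ q) = pathstart (a1 +++ q)" unfolding a1_def using q by simp
    have "path_image (a1 +++ q) homeomorphic sphere (0::complex) 1"
      by (rule homeomorphic_simple_path_image_circle[OF sp loop]) simp
    moreover have "path_image (a1 +++ q) \<subseteq> D"
    proof -
      have "path_image (a1 +++ q) = path_image a1 \<union> path_image q"
        by (rule path_image_join) (simp add: a1_def q(3))
      moreover have "path_image a1 \<subseteq> D" using im1 gD s_lt s'_gt by auto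
      moreover have "path_image q \<subseteq> D" using qp p(2) by auto
      ultimately show ?thesis by auto
    qed
    ultimately show False using nocirc by blast
  qed
qed

definition kur :: "'a::metric_space \<Rightarrow> 'a \<Rightarrow> ('a \<Rightarrow>\<^sub>C real)" where
  "kur x0 a = Bcontfun (\<lambda>z. dist a z - dist x0 z)"

lemma kur_mem: "(\<lambda>z. dist a z - dist x0 z) \<in> bcontfun"
proof (rule bcontfun_normI)
  show "continuous_on UNIV (\<lambda>z. dist a z - dist x0 z)" by (intro continuous_intros)
  fix z show "norm (dist a z - dist x0 z) \<le> dist a x0"
    using dist_triangle[of a z x0] dist_triangle[of x0 z a] by (simp add: dist_commute abs_le_iff)
qed

lemma kur_apply: "apply_bcontfun (kur x0 a) = (\<lambda>z. dist a z - dist x0 z)"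
  unfolding kur_def by (rule Bcontfun_inverse[OF kur_mem])

lemma kur_dist: "dist (kur x0 a) (kur x0 b) = dist a b"
proof (rule antisym)
  show "dist (kur x0 a) (kur x0 b) \<le> dist a b"
  proof (rule dist_bound)
    fix z show "dist (apply_bcontfun (kur x0 a) z) (apply_bcontfun (kur x0 b) z) \<le> dist a b"
      unfolding kur_apply dist_real_def
      using dist_triangle[of a z b] dist_triangle[of b z a] by (simp add: dist_commute abs_le_iff)
  qed
  have "dist (apply_bcontfun (kur x0 a) a) (apply_bcontfun (kur x0 b) a) \<le> dist (kur x0 a) (kur x0 b)"
    by (rule dist_bounded)
  then show "dist a b \<le> dist (kur x0 a) (kur x0 b)"
    unfolding kur_apply dist_real_def by (simp add: dist_commute)
qed

lemma kur_inj: "inj (kur x0)"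
  by (rule injI) (metis kur_dist dist_eq_0_iff)

lemma kur_cont: "continuous_on S (kur x0)"
proof -
  have "1-lipschitz_on S (kur x0)" by (rule lipschitz_onI) (auto simp: kur_dist)
  then show ?thesis by (rule lipschitz_on_continuous_on)
qed

lemma kur_inv_cont: "continuous_on T (inv (kur x0))" if T: "T \<subseteq> range (kur x0)"
proof -
  have "1-lipschitz_on T (inv (kur x0))"
  proof (rule lipschitz_onI)
    fix u v assume "u \<in> T" "v \<in> T"
    then obtain a b where "u = kur x0 a" "v = kur x0 b" using T by blast
    then show "dist (inv (kur x0) u) (inv (kur x0) v) \<le> 1 * dist u v"
      by (simp add: kur_inj kur_dist)
  qed simp
  then show ?thesis by (rule lipschitz_on_continuous_on)
qed

lemma cut_point:
  fixes D :: "'a::metric_space set"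
  assumes D: "compact D" "convex_metric D"
    and nocirc: "\<not> (\<exists>C. C \<subseteq> D \<and> C homeomorphic (sphere (0::complex) 1))"
    and xy: "x \<in> D" "y \<in> D" "x \<noteq> y"
  shows "\<exists>m\<in>D. m \<noteq> x \<and> m \<noteq> y \<and> y \<notin> connected_component_set (D - {m}) x"
proof -
  let ?k = "kur x"
  let ?D = "?k ` D"
  have kinv: "inv ?k (?k a) = a" for a by (simp add: kur_inj)
  have c1: "compact ?D" by (rule compact_continuous_image[OF kur_cont D(1)])
  have c2: "convex_metric ?D"
    unfolding convex_metric_def
  proof (intro ballI)
    fix u v assume "u \<in> ?D" "v \<in> ?D"
    then obtain a b where ab: "a \<in> D" "b \<in> D" "u = ?k a" "v = ?k b" by blast
    then obtain z where "z \<in> D" "dist a z = dist a b / 2" "dist z b = dist a b / 2"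
      using D(2) unfolding convex_metric_def by blast
    then show "\<exists>z\<in>?D. dist u z = dist u v / 2 \<and> dist z v = dist u v / 2"
      using ab by (intro bexI[of _ "?k z"]) (auto simp: kur_dist)
  qed
  have c3: "\<not> (\<exists>C. C \<subseteq> ?D \<and> C homeomorphic (sphere (0::complex) 1))"
  proof
    assume "\<exists>C. C \<subseteq> ?D \<and> C homeomorphic (sphere (0::complex) 1)"
    then obtain C where C: "C \<subseteq> ?D" "C homeomorphic (sphere (0::complex) 1)" by blast
    have "inv ?k ` C homeomorphic C"
    proof (rule homeomorphicI)
      show "?k ` (inv ?k ` C) = C" using C(1) by (force simp: kinv)
      show "inv ?k ` C = inv ?k ` C" ..
      show "continuous_on (inv ?k ` C) ?k" by (rule kur_cont)
      show "continuous_on C (inv ?k)" using C(1) by (intro kur_inv_cont) auto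
      show "\<And>a. a \<in> inv ?k ` C \<Longrightarrow> inv ?k (?k a) = a" by (simp add: kinv)
      show "\<And>b. b \<in> C \<Longrightarrow> ?k (inv ?k b) = b" using C(1) by (auto simp: kinv)
    qed
    then have "inv ?k ` C homeomorphic (sphere (0::complex) 1)" using C(2) homeomorphic_trans by blast
    moreover have "inv ?k ` C \<subseteq> D" using C(1) by (auto simp: kinv)
    ultimately show False using nocirc by blast
  qed
  have "?k x \<in> ?D" "?k y \<in> ?D" "?k x \<noteq> ?k y" using xy kur_inj by (auto dest: injD)
  then obtain m' where m': "m' \<in> ?D" "m' \<noteq> ?k x" "m' \<noteq> ?k y" "?k y \<notin> connected_component_set (?D - {m'}) (?k x)"
    using cut_point_nv[OF c1 c2 c3] by blast
  then obtain m where m: "m \<in> D" "m' = ?k m" by blast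
  show ?thesis
  proof (rule bexI[OF _ m(1)], intro conjI notI)
    show "m = x \<Longrightarrow> False" using m m' by simp
    show "m = y \<Longrightarrow> False" using m m' by simp
    assume "y \<in> connected_component_set (D - {m}) x"
    then obtain T where T: "connected T" "T \<subseteq> D - {m}" "x \<in> T" "y \<in> T"
      unfolding connected_component_def by auto
    have "connected (?k ` T)" by (rule connected_continuous_image[OF kur_cont T(1)])
    moreover have "?k ` T \<subseteq> ?D - {m'}" using T(2) m(2) kur_inj by (auto dest: injD)
    ultimately have "?k y \<in> connected_component_set (?D - {m'}) (?k x)"
      unfolding connected_component_def using T by blast
    then show False using m' by blast
  qed
qed

lemma disjoint_null:
  fixes D :: "'a::metric_space set" and C :: "nat \<Rightarrow> 'a set"
  assumes dD: "dendrite D" "convex_metric D"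
    and CD: "\<And>n. C n \<subseteq> D" "\<And>n. connected (C n)"
    and disj: "\<And>n m. n \<noteq> m \<Longrightarrow> C n \<inter> C m = {}"
    and eps: "\<epsilon> > 0" "infinite {n. \<epsilon> < diameter (C n)}"
  shows False
proof -
  have cD: "compact D" and lcD: "locally connected D"
    and nocirc: "\<not> (\<exists>C. C \<subseteq> D \<and> C homeomorphic (sphere (0::complex) 1))"
    using dD(1) unfolding dendrite_def by auto
  define S where "S = {n. \<epsilon> < diameter (C n)}"
  define h where "h = enumerate S"
  have infS: "infinite S" using eps(2) unfolding S_def .
  have hS: "h n \<in> S" for n unfolding h_def by (rule enumerate_in_set[OF infS])
  have hmono: "strict_mono h" unfolding h_def by (rule strict_mono_enumerate[OF infS])
  have ex: "\<exists>p. fst p \<in> C (h n) \<and> snd p \<in> C (h n) \<and> \<epsilon> < dist (fst p) (snd p)" for n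
  proof -
    have "bounded (C (h n))" using CD(1) cD by (meson bounded_subset compact_imp_bounded)
    then obtain x y where "x \<in> C (h n)" "y \<in> C (h n)" "\<epsilon> < dist x y"
      using diameter_lower_bounded[of "C (h n)" \<epsilon>] eps(1) hS[of n] unfolding S_def by auto
    then show ?thesis by (intro exI[of _ "(x, y)"]) simp
  qed
  define P where "P n = (SOME p. fst p \<in> C (h n) \<and> snd p \<in> C (h n) \<and> \<epsilon> < dist (fst p) (snd p))" for n
  have P: "fst (P n) \<in> C (h n)" "snd (P n) \<in> C (h n)" "\<epsilon> < dist (fst (P n)) (snd (P n))" for n
    using someI_ex[OF ex[of n]] unfolding P_def by auto
  have PD: "P n \<in> D \<times> D" for n using P(1,2)[of n] CD(1) by (auto simp: mem_Times_iff)
  have "seq_compact (D \<times> D)" by (intro compact_imp_seq_compact compact_Times cD)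
  then obtain l r where l: "l \<in> D \<times> D" "strict_mono r" "(P \<circ> r) \<longlonglongrightarrow> l"
    using PD unfolding seq_compact_def by blast
  define a where "a = fst l"
  define b where "b = snd l"
  have ab: "a \<in> D" "b \<in> D" using l(1) unfolding a_def b_def by (auto simp: mem_Times_iff)
  have ta: "(\<lambda>n. fst (P (r n))) \<longlonglongrightarrow> a" unfolding a_def using tendsto_fst[OF l(3)] by (simp add: o_def)
  have tb: "(\<lambda>n. snd (P (r n))) \<longlonglongrightarrow> b" unfolding b_def using tendsto_snd[OF l(3)] by (simp add: o_def)
  have "\<epsilon> \<le> dist a b"
  proof (rule tendsto_lowerbound[OF tendsto_dist[OF ta tb]])
    show "\<forall>\<^sub>F n in sequentially. \<epsilon> \<le> dist (fst (P (r n))) (snd (P (r n)))"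
      by (rule always_eventually) (metis P(3) less_imp_le)
  qed simp
  then have "a \<noteq> b" using eps(1) by auto
  then obtain m where m: "m \<in> D" "m \<noteq> a" "m \<noteq> b" "b \<notin> connected_component_set (D - {m}) a"
    using cut_point[OF cD dD(2) nocirc ab] by blast
  have op: "openin (top_of_set D) (D - {m})" by (simp add: openin_delete)
  have lc2: "locally connected (D - {m})" using locally_open_subset[OF lcD op] .
  have opc: "openin (top_of_set D) (connected_component_set (D - {m}) z)" for z
    using openin_connected_component_locally_connected[OF lc2] op by (rule openin_trans)
  have ev: "\<forall>\<^sub>F n in sequentially. f n \<in> connected_component_set (D - {m}) z"
    if f: "f \<longlonglongrightarrow> z" "\<And>n. f n \<in> D" and z: "z \<in> D - {m}" for f z
  proof -
    obtain U where U: "open U" "connected_component_set (D - {m}) z = U \<inter> D"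
      using opc[of z] unfolding openin_open by blast
    have "z \<in> U" using U(2) z connected_component_refl[OF z] by blast
    then have "\<forall>\<^sub>F n in sequentially. f n \<in> U" using topological_tendstoD[OF f(1) U(1)] by blast
    then show ?thesis using f(2) U(2) by (auto elim: eventually_mono)
  qed
  have e1: "\<forall>\<^sub>F n in sequentially. fst (P (r n)) \<in> connected_component_set (D - {m}) a"
  proof (rule ev[OF ta])
    show "fst (P (r n)) \<in> D" for n using P(1) CD(1) by blast
    show "a \<in> D - {m}" using ab m by auto
  qed
  have e2: "\<forall>\<^sub>F n in sequentially. snd (P (r n)) \<in> connected_component_set (D - {m}) b"
  proof (rule ev[OF tb])
    show "snd (P (r n)) \<in> D" for n using P(2) CD(1) by blast
    show "b \<in> D - {m}" using ab m by auto
  qed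
  have "\<forall>\<^sub>F n in sequentially. m \<in> C (h (r n))"
    using e1 e2
  proof eventually_elim
    case (elim n)
    show ?case
    proof (rule ccontr)
      assume nm: "m \<notin> C (h (r n))"
      then have sub: "C (h (r n)) \<subseteq> D - {m}" using CD(1) by blast
      have "connected_component (D - {m}) (fst (P (r n))) (snd (P (r n)))"
        unfolding connected_component_def using sub CD(2) P(1,2) by blast
      moreover have "connected_component (D - {m}) a (fst (P (r n)))" using elim(1) by simp
      ultimately have "connected_component (D - {m}) a (snd (P (r n)))"
        using connected_component_trans by blast
      moreover have "connected_component (D - {m}) (snd (P (r n))) b"
        using elim(2) by (simp add: connected_component_sym)
      ultimately have "connected_component (D - {m}) a b"
        by (rule connected_component_trans)
      then show False using m(4) by simp
    qed
  qed
  then obtain N where N: "\<And>n. n \<ge> N \<Longrightarrow> m \<in> C (h (r n))" unfolding eventually_sequentially by auto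
  have "strict_mono (h \<circ> r)" using hmono l(2) by (rule strict_mono_o)
  then have "(h \<circ> r) N < (h \<circ> r) (Suc N)" by (simp add: strict_mono_def)
  then have "h (r N) \<noteq> h (r (Suc N))" by simp
  moreover have "m \<in> C (h (r N))" "m \<in> C (h (r (Suc N)))" using N by auto
  ultimately show False using disj by blast
qed

lemma connected_chain:
  fixes A :: "nat \<Rightarrow> 'a::topological_space set"
  assumes c: "\<And>j. connected (A j)" and ne: "\<And>j. A j \<inter> A (Suc j) \<noteq> {}"
  shows "connected (\<Union>j. A j)"
proof -
  define B where "B N = (\<Union>j\<le>N. A j)" for N
  have cB: "connected (B N)" for N
  proof (induction N)
    case 0 then show ?case using c by (simp add: B_def)
  next
    case (Suc N)
    have "B (Suc N) = B N \<union> A (Suc N)" unfolding B_def by (auto simp: atMost_Suc)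
    moreover have "B N \<inter> A (Suc N) \<noteq> {}" using ne[of N] unfolding B_def by blast
    ultimately show ?case using Suc c by (simp add: connected_Un)
  qed
  have "(\<Union>j. A j) = \<Union>(range B)" unfolding B_def by auto
  moreover have "connected (\<Union>(range B))"
  proof (rule connected_Union)
    show "\<And>s. s \<in> range B \<Longrightarrow> connected s" using cB by auto
    obtain z where "z \<in> A 0" using ne[of 0] by blast
    then have "z \<in> \<Inter>(range B)" unfolding B_def by auto
    then show "\<Inter>(range B) \<noteq> {}" by blast
  qed
  ultimately show ?thesis by simp
qed

lemma funpow_image_add: "(f ^^ m) ` ((f ^^ n) ` E) = (f ^^ (m + n)) ` E"
  by (simp add: funpow_add image_comp)

lemma funpow_image_Suc: "f ` ((f ^^ n) ` E) = (f ^^ Suc n) ` E"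
  by (simp add: image_comp)

lemma comb_part:
  fixes D :: "'a::metric_space set" and f :: "'a \<Rightarrow> 'a" and E :: "'a set"
  assumes cont: "continuous_on D f" and fD: "f ` D \<subseteq> D"
    and FD: "\<And>n. (f ^^ n) ` E \<subseteq> D" and Fc: "\<And>n. connected ((f ^^ n) ` E)" and Ene: "E \<noteq> {}"
    and mini: "\<forall>m<n0. \<not> (\<exists>k>0. (f ^^ m) ` E \<inter> (f ^^ (m + k)) ` E \<noteq> {})"
    and k: "k > 0" "(f ^^ n0) ` E \<inter> (f ^^ (n0 + k)) ` E \<noteq> {}"
  shows "(\<forall>i<k. connected (Kset f E n0 k i)) \<and>
        (\<forall>i. i + 1 < k \<longrightarrow> f ` Kset f E n0 k i = Kset f E n0 k (i + 1)) \<and>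
        f ` Kset f E n0 k (k - 1) \<subseteq> Kset f E n0 k 0 \<and>
        finite (components (Orb f ((f ^^ n0) ` E))) \<and>
        (\<exists>r L. components (Orb f ((f ^^ n0) ` E)) = L ` {..<r} \<and> inj_on L {..<r} \<and>
           r dvd k \<and>
           Kset f E n0 k 0 \<subseteq> L 0 \<and> (f ^^ n0) ` E \<subseteq> Kset f E n0 k 0 \<and>
           (\<forall>j. j + 1 < r \<longrightarrow> f ` L j = L (j + 1)) \<and>
           f ` L (r - 1) \<subseteq> L 0 \<and>
           (\<forall>j<r. L j = (\<Union>l<k div r. Kset f E n0 k (j + l * r))) \<and>
           Orb f E = (\<Union>i<n0. (f ^^ i) ` E) \<union> (\<Union>j<r. L j) \<and>
           disjoint_family_on (\<lambda>i. (f ^^ i) ` E) {..<n0} \<and>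
           disjoint_family_on L {..<r} \<and>
           (\<forall>i<n0. \<forall>j<r. (f ^^ i) ` E \<inter> L j = {}))"
proof -
  define F where "F n = (f ^^ n) ` E" for n
  define K where "K = Kset f E n0 k"
  have Kdef: "K i = (\<Union>j. F (n0 + i + j * k))" for i unfolding K_def Kset_def F_def ..
  have FS: "f ` F n = F (Suc n)" for n unfolding F_def by (rule funpow_image_Suc)
  have Fadd: "(f ^^ m) ` F n = F (m + n)" for m n unfolding F_def by (rule funpow_image_add)
  have Fne: "F n \<noteq> {}" for n unfolding F_def using Ene by simp
  have disjF: "F i \<inter> F j = {}" if "i < n0" "i < j" for i j
  proof -
    have "\<not> (F i \<inter> F (i + (j - i)) \<noteq> {})" using mini that unfolding F_def
      by (metis zero_less_diff)
    then show ?thesis using that by simp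
  qed
  have K1: "f ` K i = K (Suc i)" for i
    unfolding Kdef image_UN FS by (simp add: add.commute add.left_commute)
  have K2: "K j \<subseteq> K (j mod k)" for j
  proof
    fix z assume "z \<in> K j"
    then obtain m where m: "z \<in> F (n0 + j + m * k)" unfolding Kdef by blast
    have e: "n0 + j + m * k = n0 + j mod k + (j div k + m) * k"
      by (metis add.assoc div_mod_decomp distrib_right add.commute)
    show "z \<in> K (j mod k)" using m unfolding Kdef e by blast
  qed
  have Kne: "K i \<noteq> {}" for i unfolding Kdef using Fne by blast
  have F0K: "F n0 \<subseteq> K 0" unfolding Kdef by (auto intro!: exI[of _ 0])
  obtain w where w: "w \<in> F n0" "w \<in> F (n0 + k)" using k(2) unfolding F_def by blast
  have Kc: "connected (K i)" for i
    unfolding Kdef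
  proof (rule connected_chain)
    show "connected (F (n0 + i + j * k))" for j using Fc unfolding F_def by blast
    fix j
    have "(f ^^ (i + j * k)) w \<in> F (i + j * k + n0)" using w(1) Fadd[of "i + j * k" n0] by blast
    moreover have "(f ^^ (i + j * k)) w \<in> F (i + j * k + (n0 + k))" using w(2) Fadd[of "i + j * k" "n0 + k"] by blast
    ultimately show "F (n0 + i + j * k) \<inter> F (n0 + i + Suc j * k) \<noteq> {}"
      by (auto simp: algebra_simps)
  qed
  define Ob where "Ob = Orb f (F n0)"
  have Ob_eq: "Ob = (\<Union>n. F (n + n0))" unfolding Ob_def Orb_def Fadd ..
  have KOb: "K i \<subseteq> Ob" for i
  proof
    fix z assume "z \<in> K i"
    then obtain j where j: "z \<in> F (n0 + i + j * k)" unfolding Kdef by blast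
    have e: "n0 + i + j * k = (i + j * k) + n0" by simp
    show "z \<in> Ob" using j unfolding Ob_eq e by blast
  qed
  have Ob_K: "Ob = (\<Union>i<k. K i)"
  proof
    show "Ob \<subseteq> (\<Union>i<k. K i)"
    proof
      fix z assume "z \<in> Ob"
      then obtain n where n: "z \<in> F (n + n0)" unfolding Ob_eq by blast
      have "n + n0 = n0 + n mod k + (n div k) * k" by simp
      then have "z \<in> K (n mod k)" using n unfolding Kdef by (metis UNIV_I UN_iff)
      moreover have "n mod k < k" using k(1) by simp
      ultimately show "z \<in> (\<Union>i<k. K i)" by blast
    qed
    show "(\<Union>i<k. K i) \<subseteq> Ob" using KOb by blast
  qed
  have ObD: "Ob \<subseteq> D" unfolding Ob_eq using FD F_def by blast
  have fOb: "f ` Ob \<subseteq> Ob"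
  proof -
    have "F (Suc (n + n0)) \<subseteq> (\<Union>n. F (n + n0))" for n
      by (metis UN_upper UNIV_I add_Suc)
    then show ?thesis unfolding Ob_eq image_UN FS by blast
  qed
  have ObE: "Orb f E = (\<Union>i<n0. F i) \<union> Ob"
  proof
    show "Orb f E \<subseteq> (\<Union>i<n0. F i) \<union> Ob"
    proof
      fix z assume "z \<in> Orb f E"
      then obtain n where n: "z \<in> F n" unfolding Orb_def F_def by blast
      show "z \<in> (\<Union>i<n0. F i) \<union> Ob"
      proof (cases "n < n0")
        case True then show ?thesis using n by blast
      next
        case False
        then have "n = (n - n0) + n0" by simp
        then show ?thesis using n unfolding Ob_eq by (metis UNIV_I UN_iff UnI2)
      qed
    qed
    show "(\<Union>i<n0. F i) \<union> Ob \<subseteq> Orb f E" unfolding Ob_eq Orb_def F_def by blast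
  qed
  have ex_pt: "\<forall>i. \<exists>z. z \<in> K i" using Kne by blast
  then obtain pt where pt: "\<And>i. pt i \<in> K i" by metis
  define CC where "CC i = connected_component_set Ob (pt (i mod k))" for i
  have C1: "K (i mod k) \<subseteq> CC i" for i
    unfolding CC_def by (rule connected_component_maximal[OF pt Kc KOb])
  have KC: "K i \<subseteq> CC i" for i using K2[of i] C1[of i] by blast
  have CObs: "CC i \<subseteq> Ob" for i unfolding CC_def by (rule connected_component_subset)
  have C2: "CC i \<in> components Ob" for i unfolding CC_def using pt KOb by (blast intro: componentsI)
  have C3: "connected_component_set Ob z = CC i" if "z \<in> CC i" for z i
    using that unfolding CC_def by (rule connected_component_eq)
  have ptC: "pt (i mod k) \<in> CC i" for i using C1 pt by blast
  have Cmap: "f ` CC i \<subseteq> CC (Suc i)" for i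
  proof -
    let ?p = "pt (i mod k)"
    have "f ?p \<in> K (Suc (i mod k))" using pt K1 by blast
    moreover have "K (Suc (i mod k)) \<subseteq> K (Suc i mod k)" using K2[of "Suc (i mod k)"] by (simp add: mod_Suc_eq)
    ultimately have "f ?p \<in> K (Suc i mod k)" by blast
    then have fp: "f ?p \<in> CC (Suc i)" using C1 by blast
    have "connected (f ` CC i)"
      using CObs ObD by (intro connected_continuous_image[OF continuous_on_subset[OF cont]]
          connected_connected_component[of Ob "pt (i mod k)", folded CC_def]) auto
    moreover have "f ` CC i \<subseteq> Ob" using CObs fOb by blast
    moreover have "f ?p \<in> f ` CC i" using ptC by blast
    ultimately have "f ` CC i \<subseteq> connected_component_set Ob (f ?p)"
      by (intro connected_component_maximal)
    then show ?thesis using C3[OF fp] by simp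
  qed
  have C4: "CC (Suc a) = CC (Suc b)" if "CC a = CC b" for a b
  proof -
    have "f (pt (a mod k)) \<in> CC (Suc a)" using Cmap ptC by blast
    moreover have "f (pt (a mod k)) \<in> CC (Suc b)" using Cmap ptC that by blast
    ultimately show ?thesis using C3 by metis
  qed
  have C5: "CC (a + t) = CC (b + t)" if "CC a = CC b" for a b t
  proof (induction t)
    case 0 then show ?case using that by simp
  next
    case (Suc t) then show ?case using C4[of "a + t" "b + t"] by simp
  qed
  have C6: "CC (i + q * k) = CC i" for i q unfolding CC_def by simp
  define r where "r = (LEAST r. 0 < r \<and> CC r = CC 0)"
  have Ck: "0 < k \<and> CC k = CC 0" using C6[of 0 1] k(1) by simp
  have rk: "0 < r \<and> CC r = CC 0" unfolding r_def by (rule LeastI[of _ k]) (rule Ck)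
  have rle: "r \<le> k" unfolding r_def by (rule Least_le) (rule Ck)
  have rmin: "CC s \<noteq> CC 0" if "0 < s" "s < r" for s
    using not_less_Least[of s "\<lambda>r. 0 < r \<and> CC r = CC 0"] that unfolding r_def[symmetric] by blast
  have rpos: "0 < r" using rk by simp
  have C7: "CC (a + r) = CC a" for a using C5[of r 0 a] rk by (simp add: add.commute)
  have C7q: "CC (a + q * r) = CC a" for a q
  proof (induction q)
    case 0 then show ?case by simp
  next
    case (Suc q)
    have "CC (a + Suc q * r) = CC ((a + q * r) + r)" by (simp add: algebra_simps)
    also have "\<dots> = CC (a + q * r)" by (rule C7)
    finally show ?case using Suc by simp
  qed
  have C7m: "CC a = CC (a mod r)" for a
    using C7q[of "a mod r" "a div r"] by simp
  have rdvd: "r dvd k"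
  proof -
    have "CC (k mod r) = CC (k mod r + (k div r) * r)" by (rule C7q[symmetric])
    also have "\<dots> = CC k" by simp
    also have "\<dots> = CC 0" using Ck by simp
    finally have "CC (k mod r) = CC 0" .
    moreover have "k mod r < r" using rpos by simp
    ultimately have "\<not> (0 < k mod r)" using rmin by blast
    then show ?thesis by (simp add: mod_eq_0_iff_dvd)
  qed
  have key: "False" if "a' < b'" "b' < r" "CC a' = CC b'" for a' b'
  proof -
    have eq1: "a' + (k - a') = k" using that rle by simp
    have eq2: "b' + (k - a') = (b' - a') + 1 * k" using that rle by simp
    have "CC 0 = CC k" using Ck by simp
    also have "\<dots> = CC (a' + (k - a'))" by (simp only: eq1)
    also have "\<dots> = CC (b' + (k - a'))" by (rule C5[OF that(3)])
    also have "\<dots> = CC ((b' - a') + 1 * k)" by (simp only: eq2)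
    also have "\<dots> = CC (b' - a')" by (rule C6)
    finally have "CC (b' - a') = CC 0" by simp
    moreover have "0 < b' - a'" "b' - a' < r" using that by auto
    ultimately show False using rmin by blast
  qed
  have C9: "a mod r = b mod r" if "CC a = CC b" for a b
  proof -
    have "CC (a mod r) = CC a" by (rule C7m[symmetric])
    also have "\<dots> = CC b" by (rule that)
    also have "\<dots> = CC (b mod r)" by (rule C7m)
    finally have e: "CC (a mod r) = CC (b mod r)" .
    have lt: "a mod r < r" "b mod r < r" using rpos by auto
    show ?thesis
    proof (rule ccontr)
      assume "a mod r \<noteq> b mod r"
      then have "a mod r < b mod r \<or> b mod r < a mod r" by arith
      then show False
      proof
        assume "a mod r < b mod r" then show False using key lt e by blast
      next
        assume "b mod r < a mod r" then show False using key lt e[symmetric] by blast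
      qed
    qed
  qed
  define L where "L j = CC j" for j
  have comps: "components Ob = L ` {..<r}"
  proof
    show "components Ob \<subseteq> L ` {..<r}"
    proof
      fix c assume "c \<in> components Ob"
      then obtain z where z: "z \<in> Ob" "c = connected_component_set Ob z" by (auto simp: components_iff)
      then obtain i where i: "i < k" "z \<in> K i" using Ob_K by blast
      then have "z \<in> CC i" using KC by blast
      then have "c = CC i" using C3 z(2) by simp
      also have "\<dots> = CC (i mod r)" by (rule C7m)
      finally show "c \<in> L ` {..<r}" unfolding L_def using rpos by auto
    qed
    show "L ` {..<r} \<subseteq> components Ob" unfolding L_def using C2 by blast
  qed
  have injL: "inj_on L {..<r}"
  proof (rule inj_onI)
    fix a b assume ab: "a \<in> {..<r}" "b \<in> {..<r}" "L a = L b"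
    then have "a mod r = b mod r" using C9 unfolding L_def by blast
    then show "a = b" using ab by simp
  qed
  have Kform: "L j = (\<Union>l<k div r. K (j + l * r))" if j: "j < r" for j
  proof
    show "(\<Union>l<k div r. K (j + l * r)) \<subseteq> L j"
      unfolding L_def using KC C7q by blast
    show "L j \<subseteq> (\<Union>l<k div r. K (j + l * r))"
    proof
      fix z assume z: "z \<in> L j"
      then have "z \<in> Ob" using CObs unfolding L_def by blast
      then obtain i where i: "i < k" "z \<in> K i" using Ob_K by blast
      then have "z \<in> CC i" using KC by blast
      then have "CC i = CC j" using C3 z unfolding L_def by metis
      then have "i mod r = j" using C9 j by fastforce
      then have ie: "i = j + (i div r) * r" by (metis mod_div_mult_eq add.commute)
      obtain q where q: "k = r * q" using rdvd by blast
      have "i div r < k div r" using i(1) q rpos by (simp add: less_mult_imp_div_less mult.commute)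
      then show "z \<in> (\<Union>l<k div r. K (j + l * r))" using i(2) ie by (metis UN_iff lessThan_iff)
    qed
  qed
  have fL: "f ` L j = L (j + 1)" if "j + 1 < r" for j
  proof -
    have "f ` L j = (\<Union>l<k div r. f ` K (j + l * r))" using Kform[of j] that by (simp add: image_UN)
    also have "\<dots> = (\<Union>l<k div r. K ((j + 1) + l * r))" using K1 by simp
    also have "\<dots> = L (j + 1)" using Kform[of "j + 1"] that by simp
    finally show ?thesis .
  qed
  have fLr: "f ` L (r - 1) \<subseteq> L 0"
    using Cmap[of "r - 1"] rk rpos unfolding L_def by simp
  have Orb_eq: "Orb f E = (\<Union>i<n0. (f ^^ i) ` E) \<union> (\<Union>j<r. L j)"
  proof -
    have "Ob = \<Union>(components Ob)" by simp
    also have "\<dots> = (\<Union>j<r. L j)" unfolding comps by simp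
    finally show ?thesis using ObE unfolding F_def by simp
  qed
  have dF: "disjoint_family_on (\<lambda>i. (f ^^ i) ` E) {..<n0}"
    unfolding disjoint_family_on_def F_def[symmetric]
    using disjF by (metis Int_commute lessThan_iff linorder_neqE_nat)
  have dL: "disjoint_family_on L {..<r}"
    unfolding disjoint_family_on_def
  proof (intro ballI impI)
    fix a b assume ab: "a \<in> {..<r}" "b \<in> {..<r}" "a \<noteq> b"
    then have "L a \<noteq> L b" using injL by (auto dest: inj_onD)
    then show "L a \<inter> L b = {}" using components_nonoverlap comps ab by blast
  qed
  have dFL: "(f ^^ i) ` E \<inter> L j = {}" if "i < n0" "j < r" for i j
  proof -
    have "L j \<subseteq> Ob" using CObs unfolding L_def by blast
    moreover have "F i \<inter> F (n + n0) = {}" for n using disjF[of i "n + n0"] that by simp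
    ultimately show ?thesis unfolding F_def[symmetric] Ob_eq by blast
  qed
  have K0L: "K 0 \<subseteq> L 0" unfolding L_def using KC by blast
  have fK: "f ` K (k - 1) \<subseteq> K 0" using K1[of "k - 1"] K2[of k] k(1) by simp
  have Obf: "Orb f ((f ^^ n0) ` E) = Ob" unfolding Ob_def F_def ..
  have Kf: "Kset f E n0 k = K" unfolding K_def ..
  have F0K': "(f ^^ n0) ` E \<subseteq> K 0" using F0K unfolding F_def .
  have fin: "finite (components Ob)" unfolding comps by simp
  have c1: "\<forall>i<k. connected (K i)" using Kc by blast
  have c2: "\<forall>i. i + 1 < k \<longrightarrow> f ` K i = K (i + 1)" using K1 by simp
  have c3: "\<forall>j. j + 1 < r \<longrightarrow> f ` L j = L (j + 1)" using fL by blast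
  have c4: "\<forall>j<r. L j = (\<Union>l<k div r. K (j + l * r))" using Kform by blast
  have c5: "\<forall>i<n0. \<forall>j<r. (f ^^ i) ` E \<inter> L j = {}" using dFL by blast
  have ex: "\<exists>r L. components Ob = L ` {..<r} \<and> inj_on L {..<r} \<and>
           r dvd k \<and>
           K 0 \<subseteq> L 0 \<and> (f ^^ n0) ` E \<subseteq> K 0 \<and>
           (\<forall>j. j + 1 < r \<longrightarrow> f ` L j = L (j + 1)) \<and>
           f ` L (r - 1) \<subseteq> L 0 \<and>
           (\<forall>j<r. L j = (\<Union>l<k div r. K (j + l * r))) \<and>
           Orb f E = (\<Union>i<n0. (f ^^ i) ` E) \<union> (\<Union>j<r. L j) \<and>
           disjoint_family_on (\<lambda>i. (f ^^ i) ` E) {..<n0} \<and>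
           disjoint_family_on L {..<r} \<and>
           (\<forall>i<n0. \<forall>j<r. (f ^^ i) ` E \<inter> L j = {})"
    using comps injL rdvd K0L F0K' c3 fLr c4 Orb_eq dF dL c5 by blast
  show ?thesis unfolding Obf Kf using c1 c2 fK fin ex by blast
qed

theorem lemma13:
  fixes D :: "'a::metric_space set" and f :: "'a \<Rightarrow> 'a" and E :: "'a set"
  assumes "dendrite D" and "convex_metric D" and "finite_length D"
    and "continuous_on D f" and "f ` D \<subseteq> D"
    and "E \<subseteq> D" and "connected E"
    and "limsup (\<lambda>n. ereal (diameter ((f ^^ n) ` E))) > 0"
  shows "\<exists>n0.
     (\<exists>k>0. (f ^^ n0) ` E \<inter> (f ^^ (n0 + k)) ` E \<noteq> {}) \<and>
     (\<forall>m<n0. \<not> (\<exists>k>0. (f ^^ m) ` E \<inter> (f ^^ (m + k)) ` E \<noteq> {})) \<and>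
     (\<forall>k. k > 0 \<and> (f ^^ n0) ` E \<inter> (f ^^ (n0 + k)) ` E \<noteq> {} \<longrightarrow>
        (\<forall>i<k. connected (Kset f E n0 k i)) \<and>
        (\<forall>i. i + 1 < k \<longrightarrow> f ` Kset f E n0 k i = Kset f E n0 k (i + 1)) \<and>
        f ` Kset f E n0 k (k - 1) \<subseteq> Kset f E n0 k 0 \<and>
        finite (components (Orb f ((f ^^ n0) ` E))) \<and>
        (\<exists>r L. components (Orb f ((f ^^ n0) ` E)) = L ` {..<r} \<and> inj_on L {..<r} \<and>
           r dvd k \<and>
           Kset f E n0 k 0 \<subseteq> L 0 \<and> (f ^^ n0) ` E \<subseteq> Kset f E n0 k 0 \<and>
           (\<forall>j. j + 1 < r \<longrightarrow> f ` L j = L (j + 1)) \<and>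
           f ` L (r - 1) \<subseteq> L 0 \<and>
           (\<forall>j<r. L j = (\<Union>l<k div r. Kset f E n0 k (j + l * r))) \<and>
           Orb f E = (\<Union>i<n0. (f ^^ i) ` E) \<union> (\<Union>j<r. L j) \<and>
           disjoint_family_on (\<lambda>i. (f ^^ i) ` E) {..<n0} \<and>
           disjoint_family_on L {..<r} \<and>
           (\<forall>i<n0. \<forall>j<r. (f ^^ i) ` E \<inter> L j = {})))"
proof -
  note dD = assms(1) and cvx = assms(2) and cont = assms(4) and fD = assms(5)
    and ED = assms(6) and Ec = assms(7) and ls = assms(8)
  have FD: "(f ^^ n) ` E \<subseteq> D" for n
  proof (induction n)
    case 0 then show ?case using ED by simp
  next
    case (Suc n)
    have "(f ^^ Suc n) ` E = f ` ((f ^^ n) ` E)" by (simp add: image_comp)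
    then show ?case using Suc fD by blast
  qed
  have Fc: "connected ((f ^^ n) ` E)" for n
  proof (induction n)
    case 0 then show ?case using Ec by simp
  next
    case (Suc n)
    have "(f ^^ Suc n) ` E = f ` ((f ^^ n) ` E)" by (simp add: image_comp)
    then show ?case
      using connected_continuous_image[OF continuous_on_subset[OF cont FD[of n]] Suc] by simp
  qed
  have Ene: "E \<noteq> {}"
  proof
    assume "E = {}"
    then have "(\<lambda>n. ereal (diameter ((f ^^ n) ` E))) = (\<lambda>n. 0)" by (simp add: zero_ereal_def)
    then show False using ls by (simp add: Limsup_const)
  qed
  have exist: "\<exists>n k. k > 0 \<and> (f ^^ n) ` E \<inter> (f ^^ (n + k)) ` E \<noteq> {}"
  proof (rule ccontr)
    assume nex: "\<not> ?thesis"
    have disj: "(f ^^ n) ` E \<inter> (f ^^ m) ` E = {}" if "n \<noteq> m" for n m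
    proof (cases "n < m")
      case True
      then show ?thesis using nex by (metis add_diff_inverse_nat not_less_iff_gr_or_eq zero_less_diff)
    next
      case False
      then have "m < n" using that by simp
      then show ?thesis using nex by (metis Int_commute add_diff_inverse_nat not_less_iff_gr_or_eq zero_less_diff)
    qed
    obtain z where z: "0 < ereal z" "ereal z < limsup (\<lambda>n. ereal (diameter ((f ^^ n) ` E)))"
      using ereal_dense2[OF ls] by blast
    have inf: "infinite {n. z < diameter ((f ^^ n) ` E)}"
    proof
      assume fin: "finite {n. z < diameter ((f ^^ n) ` E)}"
      have "eventually (\<lambda>n. \<not> (z < diameter ((f ^^ n) ` E))) cofinite"
        unfolding eventually_cofinite using fin by simp
      then have "eventually (\<lambda>n. ereal (diameter ((f ^^ n) ` E)) \<le> ereal z) sequentially"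
        unfolding cofinite_eq_sequentially by (auto elim: eventually_mono)
      then have "limsup (\<lambda>n. ereal (diameter ((f ^^ n) ` E))) \<le> ereal z" by (rule Limsup_bounded)
      then show False using z by simp
    qed
    show False using disjoint_null[OF dD cvx FD Fc disj _ inf] z by simp
  qed
  define P where "P m = (\<exists>k>0. (f ^^ m) ` E \<inter> (f ^^ (m + k)) ` E \<noteq> {})" for m
  define n0 where "n0 = (LEAST m. P m)"
  have Pn0: "P n0" unfolding n0_def using exist P_def by (metis LeastI_ex)
  have mini: "\<forall>m<n0. \<not> P m" unfolding n0_def using not_less_Least by blast
  have c3: "\<forall>k. k > 0 \<and> (f ^^ n0) ` E \<inter> (f ^^ (n0 + k)) ` E \<noteq> {} \<longrightarrow>
        (\<forall>i<k. connected (Kset f E n0 k i)) \<and>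
        (\<forall>i. i + 1 < k \<longrightarrow> f ` Kset f E n0 k i = Kset f E n0 k (i + 1)) \<and>
        f ` Kset f E n0 k (k - 1) \<subseteq> Kset f E n0 k 0 \<and>
        finite (components (Orb f ((f ^^ n0) ` E))) \<and>
        (\<exists>r L. components (Orb f ((f ^^ n0) ` E)) = L ` {..<r} \<and> inj_on L {..<r} \<and>
           r dvd k \<and>
           Kset f E n0 k 0 \<subseteq> L 0 \<and> (f ^^ n0) ` E \<subseteq> Kset f E n0 k 0 \<and>
           (\<forall>j. j + 1 < r \<longrightarrow> f ` L j = L (j + 1)) \<and>
           f ` L (r - 1) \<subseteq> L 0 \<and>
           (\<forall>j<r. L j = (\<Union>l<k div r. Kset f E n0 k (j + l * r))) \<and>
           Orb f E = (\<Union>i<n0. (f ^^ i) ` E) \<union> (\<Union>j<r. L j) \<and>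
           disjoint_family_on (\<lambda>i. (f ^^ i) ` E) {..<n0} \<and>
           disjoint_family_on L {..<r} \<and>
           (\<forall>i<n0. \<forall>j<r. (f ^^ i) ` E \<inter> L j = {}))"
  proof (intro allI impI)
    fix k assume k: "k > 0 \<and> (f ^^ n0) ` E \<inter> (f ^^ (n0 + k)) ` E \<noteq> {}"
    have mini': "\<forall>m<n0. \<not> (\<exists>k>0. (f ^^ m) ` E \<inter> (f ^^ (m + k)) ` E \<noteq> {})" using mini unfolding P_def .
    show "(\<forall>i<k. connected (Kset f E n0 k i)) \<and>
        (\<forall>i. i + 1 < k \<longrightarrow> f ` Kset f E n0 k i = Kset f E n0 k (i + 1)) \<and>
        f ` Kset f E n0 k (k - 1) \<subseteq> Kset f E n0 k 0 \<and>
        finite (components (Orb f ((f ^^ n0) ` E))) \<and>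
        (\<exists>r L. components (Orb f ((f ^^ n0) ` E)) = L ` {..<r} \<and> inj_on L {..<r} \<and>
           r dvd k \<and>
           Kset f E n0 k 0 \<subseteq> L 0 \<and> (f ^^ n0) ` E \<subseteq> Kset f E n0 k 0 \<and>
           (\<forall>j. j + 1 < r \<longrightarrow> f ` L j = L (j + 1)) \<and>
           f ` L (r - 1) \<subseteq> L 0 \<and>
           (\<forall>j<r. L j = (\<Union>l<k div r. Kset f E n0 k (j + l * r))) \<and>
           Orb f E = (\<Union>i<n0. (f ^^ i) ` E) \<union> (\<Union>j<r. L j) \<and>
           disjoint_family_on (\<lambda>i. (f ^^ i) ` E) {..<n0} \<and>
           disjoint_family_on L {..<r} \<and>
           (\<forall>i<n0. \<forall>j<r. (f ^^ i) ` E \<inter> L j = {}))"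
      using k by (intro comb_part[OF cont fD FD Fc Ene mini']) auto
  qed
  have c1: "\<exists>k>0. (f ^^ n0) ` E \<inter> (f ^^ (n0 + k)) ` E \<noteq> {}" using Pn0 unfolding P_def .
  have c2: "\<forall>m<n0. \<not> (\<exists>k>0. (f ^^ m) ` E \<inter> (f ^^ (m + k)) ` E \<noteq> {})" using mini unfolding P_def .
  show ?thesis using c1 c2 c3 by blast
qed

end
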